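(* Let $g\colon\mathbb X\to\mathbb Y$ be twice continuously differentiable, $D\subset\mathbb Y$ closed, $\Phi(x):=g(x)-D$, $(\bar x,0)\in\operatorname{gph}\Phi$, $u\in\mathbb S_{\mathbb X}$. Then $\Phi$ is strongly asymptotically regular at $(\bar x,0)$ in direction $u$ if FOSCMS$(u)$ holds, or if $\mathbb Y=\mathbb R^m$, $D$ is polyhedral locally around $g(\bar x)$, and SOSCMS$(u)$ holds.
   Context: FOSCMS$(u)$: every $y^*\in\mathcal N_D(g(\bar x);\nabla g(\bar x)u)$ with $\nabla g(\bar x)^*y^*=0$ is zero. SOSCMS$(u)$: every $y^*\in\mathcal N_D(g(\bar x);\nabla g(\bar x)u)$ with $\nabla g(\bar x)^*y^*=0$ and $\langle u,\nabla^2\langle y^*,g\rangle(\bar x)u\rangle\ge0$ is zero. $\mathcal N_D(y;w)$ is the directional limiting normal cone (limits of $\eta_k\in\widehat{\mathcal N}_D(y+t_kw_k)$, $w_k\to w$, $t_k\searrow0$). $D$ polyhedral locally around $y$: $D\cap V$ is a finite union of convex polyhedra for some neighbourhood $V$ of $y$. Strong asymptotic regularity in direction $u$ at $(\bar x,\bar y)$: for all $\{(x_k,y_k)\}\subset\operatorname{gph}\Phi$, $\{x_k^*\}\subset\mathbb X$, $\{\lambda_k\}\subset\mathbb Y$, $x^*,y^*$ with $x_k\notin\Phi^{-1}(\bar y)$, $y_k\ne\bar y$, $x_k^*\in\widehat D^*\Phi(x_k,y_k)(\lambda_k)$ (regular coderivative), $x_k\to\bar x$, $y_k\to\bar y$,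 $x_k^*\to x^*$, $(x_k-\bar x)/\|x_k-\bar x\|\to u$, $(y_k-\bar y)/\|x_k-\bar x\|\to0$, $\|\lambda_k\|\to\infty$, $(y_k-\bar y)/\|y_k-\bar y\|-\lambda_k/\|\lambda_k\|\to0$, $(\|y_k-\bar y\|/\|x_k-\bar x\|)\lambda_k\to y^*$, one has $x^*\in\bigcup_{\lambda}D^*\Phi((\bar x,\bar y);(u,0))(\lambda)$, where $x^*\in D^*\Phi((\bar x,\bar y);(u,0))(\lambda)$ iff $(x^*,-\lambda)\in\mathcal N_{\operatorname{gph}\Phi}((\bar x,\bar y);(u,0))$. *)

theory Defs
  imports "HOL-Analysis.Analysis"
begin

definition reg_normal :: "'a::euclidean_space set \<Rightarrow> 'a \<Rightarrow> 'a set" where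
  "reg_normal C x = {v. x \<in> C \<and>
     (\<forall>\<epsilon>>0. \<exists>\<delta>>0. \<forall>z\<in>C. norm (z - x) < \<delta> \<longrightarrow> inner v (z - x) \<le> \<epsilon> * norm (z - x))}"

definition dir_normal :: "'a::euclidean_space set \<Rightarrow> 'a \<Rightarrow> 'a \<Rightarrow> 'a set" where
  "dir_normal C y w = {\<eta>. \<exists>(t::nat \<Rightarrow> real) wk \<eta>k.
      (\<forall>k. t k > 0) \<and> t \<longlonglongrightarrow> 0 \<and> wk \<longlonglongrightarrow> w \<and> \<eta>k \<longlonglongrightarrow> \<eta> \<and>
      (\<forall>k. \<eta>k k \<in> reg_normal C (y + t k *\<^sub>R wk k))}"

definition gph :: "('a \<Rightarrow> 'b set) \<Rightarrow> ('a \<times> 'b) set" where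
  "gph \<Phi> = {(x, y). y \<in> \<Phi> x}"

definition reg_coderiv :: "('a::euclidean_space \<Rightarrow> 'b::euclidean_space set) \<Rightarrow> 'a \<Rightarrow> 'b \<Rightarrow> 'b \<Rightarrow> 'a set" where
  "reg_coderiv \<Phi> x y lm = {xs. (xs, - lm) \<in> reg_normal (gph \<Phi>) (x, y)}"

definition dir_coderiv :: "('a::euclidean_space \<Rightarrow> 'b::euclidean_space set) \<Rightarrow> 'a \<Rightarrow> 'b \<Rightarrow> 'a \<Rightarrow> 'b \<Rightarrow> 'b \<Rightarrow> 'a set" where
  "dir_coderiv \<Phi> x y u v lm = {xs. (xs, - lm) \<in> dir_normal (gph \<Phi>) (x, y) (u, v)}"

definition strongly_asymp_regular ::
  "('a::euclidean_space \<Rightarrow> 'b::euclidean_space set) \<Rightarrow> 'a \<Rightarrow> 'b \<Rightarrow> 'a \<Rightarrow> bool" where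
  "strongly_asymp_regular \<Phi> xb yb u \<longleftrightarrow>
    (\<forall>(x::nat \<Rightarrow> 'a) (y::nat \<Rightarrow> 'b) (xs::nat \<Rightarrow> 'a) (lam::nat \<Rightarrow> 'b) xst yst.
       (\<forall>k. (x k, y k) \<in> gph \<Phi>) \<and>
       (\<forall>k. x k \<notin> {z. yb \<in> \<Phi> z}) \<and> (\<forall>k. y k \<noteq> yb) \<and>
       (\<forall>k. xs k \<in> reg_coderiv \<Phi> (x k) (y k) (lam k)) \<and>
       x \<longlonglongrightarrow> xb \<and> y \<longlonglongrightarrow> yb \<and> xs \<longlonglongrightarrow> xst \<and>
       (\<lambda>k. (1 / norm (x k - xb)) *\<^sub>R (x k - xb)) \<longlonglongrightarrow> u \<and>
       (\<lambda>k. (1 / norm (x k - xb)) *\<^sub>R (y k - yb)) \<longlonglongrightarrow> 0 \<and>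
       filterlim (\<lambda>k. norm (lam k)) at_top sequentially \<and>
       (\<lambda>k. (1 / norm (y k - yb)) *\<^sub>R (y k - yb) - (1 / norm (lam k)) *\<^sub>R lam k) \<longlonglongrightarrow> 0 \<and>
       (\<lambda>k. (norm (y k - yb) / norm (x k - xb)) *\<^sub>R lam k) \<longlonglongrightarrow> yst
     \<longrightarrow> (\<exists>lm. xst \<in> dir_coderiv \<Phi> xb yb u 0 lm))"

definition locally_polyhedral :: "'a::euclidean_space set \<Rightarrow> 'a \<Rightarrow> bool" where
  "locally_polyhedral D y \<longleftrightarrow> (\<exists>V P. open V \<and> y \<in> V \<and> finite P \<and>
      (\<forall>p\<in>P. polyhedron p) \<and> D \<inter> V = \<Union>P)"

end

theory Submission
  imports Defs
begin


lemma reg_normal_scale: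
  assumes "v \<in> reg_normal C x" "c > 0"
  shows "c *\<^sub>R v \<in> reg_normal C x"
proof -
  have xC: "x \<in> C" using assms(1) by (simp add: reg_normal_def)
  show ?thesis unfolding reg_normal_def
  proof (intro CollectI conjI allI impI xC)
    fix e :: real assume e: "e > 0"
    have "e/c > 0" using e assms(2) by simp
    then obtain d where d: "d > 0" "\<forall>z\<in>C. norm (z - x) < d \<longrightarrow> inner v (z - x) \<le> (e/c) * norm (z - x)"
      using assms(1) unfolding reg_normal_def by blast
    show "\<exists>d>0. \<forall>z\<in>C. norm (z - x) < d \<longrightarrow> inner (c *\<^sub>R v) (z - x) \<le> e * norm (z - x)"
    proof (intro exI[of _ d] conjI ballI impI d(1))
      fix z assume "z \<in> C" "norm (z - x) < d"
      then have "inner v (z - x) \<le> (e/c) * norm (z - x)" using d by blast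
      then show "inner (c *\<^sub>R v) (z - x) \<le> e * norm (z - x)" using assms(2)
        by (simp add: pos_le_divide_eq mult.commute)
    qed
  qed
qed

lemma reg_normal_ray:
  assumes "v \<in> reg_normal C x" "b > 0" "\<And>s. 0 < s \<Longrightarrow> s < b \<Longrightarrow> x + s *\<^sub>R w \<in> C"
  shows "inner v w \<le> 0"
proof (rule ccontr)
  assume "\<not> inner v w \<le> 0"
  then have pos: "inner v w > 0" by simp
  define e where "e = inner v w / (norm w + 1)"
  have e: "e > 0" using pos unfolding e_def by (intro divide_pos_pos) (auto intro: add_nonneg_pos)
  obtain d where d: "d > 0" "\<forall>z\<in>C. norm (z - x) < d \<longrightarrow> inner v (z - x) \<le> e * norm (z - x)"
    using assms(1) e unfolding reg_normal_def by blast
  define s where "s = min (b/2) (d/(2*(norm w + 1)))"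
  have nw: "norm w + 1 > 0" by (simp add: add_nonneg_pos)
  have "d/(2*(norm w + 1)) > 0" using d(1) nw by simp
  then have s: "s > 0" "s < b" using d assms(2) by (auto simp: s_def)
  have "s \<le> d/(2*(norm w + 1))" by (simp add: s_def)
  then have "s * (2*(norm w + 1)) \<le> d" using nw by (simp add: pos_le_divide_eq)
  then have sn: "norm (s *\<^sub>R w) < d" using s d nw by (simp add: algebra_simps)
  have "inner v (s *\<^sub>R w) \<le> e * norm (s *\<^sub>R w)"
    using d(2) assms(3)[OF s] sn by (metis add_diff_cancel_left')
  then have "s * inner v w \<le> s * (e * norm w)" using s by (simp add: algebra_simps)
  then have "inner v w \<le> e * norm w" using s by simp
  moreover have "e * norm w < inner v w"
  proof -
    have "e * norm w = inner v w * (norm w / (norm w + 1))" by (simp add: e_def)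
    also have "\<dots> < inner v w * 1"
      using pos nw by (intro mult_strict_left_mono) (auto simp: divide_less_eq)
    finally show ?thesis by simp
  qed
  ultimately show False by simp
qed



lemma gph_normal_D:
  assumes "(xs, -lm) \<in> reg_normal {(x,y). y \<in> {g x - d |d. d \<in> D}} (x, y)"
  shows "lm \<in> reg_normal D (g x - y)"
proof -
  let ?G = "{(x,y). y \<in> {g x - d |d. d \<in> D}}"
  have xy: "(x,y) \<in> ?G" using assms by (simp add: reg_normal_def)
  then obtain d0 where d0: "d0 \<in> D" "y = g x - d0" by auto
  have gy: "g x - y = d0" using d0 by simp
  show ?thesis unfolding reg_normal_def gy
  proof (intro CollectI conjI allI impI d0(1))
    fix e :: real assume e: "e > 0"
    then obtain d where d: "d > 0" "\<forall>z\<in>?G. norm (z - (x,y)) < d \<longrightarrow> inner (xs, -lm) (z - (x,y)) \<le> e * norm (z - (x,y))"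
      using assms unfolding reg_normal_def by blast
    show "\<exists>d>0. \<forall>z\<in>D. norm (z - d0) < d \<longrightarrow> inner lm (z - d0) \<le> e * norm (z - d0)"
    proof (intro exI[of _ d] conjI ballI impI d(1))
      fix z assume z: "z \<in> D" "norm (z - d0) < d"
      have inG: "(x, g x - z) \<in> ?G" using z by auto
      have eq: "(x, g x - z) - (x,y) = (0, d0 - z)" using d0 by simp
      have nz: "norm ((0::'a, d0 - z)) = norm (z - d0)" by (simp add: norm_Pair norm_minus_commute)
      have "norm ((x, g x - z) - (x,y)) < d" unfolding eq nz using z(2) .
      then have "inner (xs, -lm) ((x, g x - z) - (x,y)) \<le> e * norm ((x, g x - z) - (x,y))"
        using d(2) inG by blast
      then show "inner lm (z - d0) \<le> e * norm (z - d0)" unfolding eq nz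
        by (simp add: inner_diff_right)
    qed
  qed
qed

lemma gph_normal_adj_le:
  fixes g :: "'a::euclidean_space \<Rightarrow> 'b::euclidean_space"
  assumes der: "(g has_derivative G) (at x)"
    and nrm: "(xs, -lm) \<in> reg_normal {(x,y). y \<in> {g x - d |d. d \<in> D}} (x, y)"
  shows "inner xs h \<le> inner lm (G h)"
proof (rule ccontr)
  let ?G = "{(x,y). y \<in> {g x - d |d. d \<in> D}}"
  assume "\<not> inner xs h \<le> inner lm (G h)"
  define c where "c = inner xs h - inner lm (G h)"
  have c: "c > 0" using \<open>\<not> _\<close> by (simp add: c_def)
  have xy: "(x,y) \<in> ?G" using nrm by (simp add: reg_normal_def)
  then obtain d0 where d0: "d0 \<in> D" "y = g x - d0" by auto
  have lin0: "linear G" using has_derivative_bounded_linear[OF der] bounded_linear.linear by blast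
  have h0: "h \<noteq> 0" using c lin0 by (auto simp: c_def linear_0)
  then have nh: "norm h > 0" by simp
  define K where "K = 2 * norm h + norm (G h)"
  have K: "K > 0" using nh by (simp add: K_def add_pos_nonneg)
  define eps where "eps = c / (2 * K)"
  have eps: "eps > 0" using c K by (simp add: eps_def)
  define e where "e = min 1 (c / (2 * (norm lm * norm h + 1)))"
  have nl1: "norm lm * norm h + 1 > 0" by (simp add: add_nonneg_pos)
  have e: "e > 0" "e \<le> 1" using c nl1 by (auto simp: e_def)
  have e2: "norm lm * (e * norm h) < c/2"
  proof -
    have "e \<le> c / (2 * (norm lm * norm h + 1))" by (simp add: e_def)
    then have "e * (2 * (norm lm * norm h + 1)) \<le> c" using nl1 by (simp add: pos_le_divide_eq)
    then have "2 * (norm lm * (e * norm h)) + 2*e \<le> c" by (simp add: algebra_simps)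
    then show ?thesis using e by simp
  qed
  obtain d1 where d1: "d1 > 0" "\<forall>z. norm (z - x) < d1 \<longrightarrow> norm (g z - g x - G (z - x)) \<le> e * norm (z - x)"
    using der e(1) unfolding has_derivative_at_alt by blast
  obtain d2 where d2: "d2 > 0" "\<forall>z\<in>?G. norm (z - (x,y)) < d2 \<longrightarrow> inner (xs, -lm) (z - (x,y)) \<le> eps * norm (z - (x,y))"
    using nrm eps unfolding reg_normal_def by blast
  define s where "s = min (d1 / (2 * K)) (d2 / (2 * K))"
  have s: "s > 0" using d1 d2 K by (simp add: s_def)
  have "s \<le> d1 / (2 * K)" by (simp add: s_def)
  then have sK1: "s * (2*K) \<le> d1" using K by (simp add: pos_le_divide_eq)
  have "s \<le> d2 / (2 * K)" by (simp add: s_def)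
  then have sK2: "s * (2*K) \<le> d2" using K by (simp add: pos_le_divide_eq)
  have shK: "s * norm h \<le> s * K" using s by (intro mult_left_mono) (auto simp: K_def)
  have sKK: "s * K < s * (2*K)" using s K by simp
  have "norm ((x + s *\<^sub>R h) - x) = s * norm h" using s by simp
  then have n1: "norm ((x + s *\<^sub>R h) - x) < d1" using shK sKK sK1 by linarith
  define r where "r = g (x + s *\<^sub>R h) - g x - G (s *\<^sub>R h)"
  have r: "norm r \<le> e * (s * norm h)" using d1(2)[rule_format, OF n1] s by (simp add: r_def)
  have lin: "linear G" using has_derivative_bounded_linear[OF der] bounded_linear.linear by blast
  have Gs: "G (s *\<^sub>R h) = s *\<^sub>R G h" using lin by (simp add: linear_scale)
  have gdiff: "g (x + s *\<^sub>R h) - g x = s *\<^sub>R G h + r" using Gs by (simp add: r_def)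
  have ngd: "norm (g (x + s *\<^sub>R h) - g x) \<le> s * norm (G h) + s * norm h"
  proof -
    have "norm (g (x + s *\<^sub>R h) - g x) \<le> norm (s *\<^sub>R G h) + norm r" unfolding gdiff by (rule norm_triangle_ineq)
    also have "\<dots> \<le> s * norm (G h) + e * (s * norm h)" using r s by simp
    also have "\<dots> \<le> s * norm (G h) + s * norm h" using e s nh by (simp add: mult_left_le_one_le)
    finally show ?thesis .
  qed
  define p where "p = (x + s *\<^sub>R h, g (x + s *\<^sub>R h) - d0)"
  have pG: "p \<in> ?G" using d0 by (auto simp: p_def)
  have pd: "p - (x,y) = (s *\<^sub>R h, g (x + s *\<^sub>R h) - g x)" using d0 by (simp add: p_def)
  have np: "norm (p - (x,y)) \<le> s * K"
  proof -
    have "norm (p - (x,y)) \<le> norm (s *\<^sub>R h) + norm (g (x + s *\<^sub>R h) - g x)" unfolding pd by (rule norm_Pair_le)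
    also have "\<dots> \<le> s * norm h + (s * norm (G h) + s * norm h)" using ngd s by simp
    also have "\<dots> = s * K" by (simp add: K_def algebra_simps)
    finally show ?thesis .
  qed
  have np2: "norm (p - (x,y)) < d2" using np sK2 sKK by linarith
  have ineq: "inner (xs, -lm) (p - (x,y)) \<le> eps * norm (p - (x,y))" using d2(2) pG np2 by blast
  have "eps * norm (p - (x,y)) \<le> eps * (s * K)" using np eps by (simp add: mult_left_mono)
  also have "\<dots> = s * (c/2)" using K by (simp add: eps_def field_simps)
  finally have ineq2: "inner (xs, -lm) (p - (x,y)) \<le> s * (c/2)" using ineq by linarith
  have lhs: "inner (xs, -lm) (p - (x,y)) = s * inner xs h - s * inner lm (G h) - inner lm r"
    unfolding pd gdiff by (simp add: inner_add_right algebra_simps)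
  have "inner lm r \<le> norm lm * norm r" by (rule norm_cauchy_schwarz)
  also have "\<dots> \<le> norm lm * (e * (s * norm h))" using r by (simp add: mult_left_mono)
  also have "\<dots> = s * (norm lm * (e * norm h))" by (simp add: algebra_simps)
  also have "\<dots> < s * (c/2)" using e2 s by simp
  finally have lr: "inner lm r < s * (c/2)" .
  have "s * c = s * inner xs h - s * inner lm (G h)" by (simp add: c_def algebra_simps)
  then show False using lhs ineq2 lr by linarith
qed

lemma gph_normal_adj:
  fixes g :: "'a::euclidean_space \<Rightarrow> 'b::euclidean_space"
  assumes der: "(g has_derivative G) (at x)"
    and nrm: "(xs, -lm) \<in> reg_normal {(x,y). y \<in> {g x - d |d. d \<in> D}} (x, y)"
  shows "xs = adjoint G lm"
proof -
  have lin: "linear G" using has_derivative_bounded_linear[OF der] bounded_linear.linear by blast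
  have eq: "inner xs h = inner (adjoint G lm) h" for h
  proof -
    have a: "inner xs h \<le> inner lm (G h)" by (rule gph_normal_adj_le[OF der nrm])
    have b: "inner xs (-h) \<le> inner lm (G (-h))" by (rule gph_normal_adj_le[OF der nrm])
    have "G (-h) = - G h" using lin by (simp add: linear_neg)
    then have "inner xs h = inner lm (G h)" using a b by simp
    also have "\<dots> = inner (adjoint G lm) h" using adjoint_works[OF lin, of h lm] by (simp add: inner_commute)
    finally show ?thesis .
  qed
  have "inner (xs - adjoint G lm) (xs - adjoint G lm) = 0"
    by (simp add: inner_diff_left eq)
  then show ?thesis by simp
qed



lemma deriv_seq:
  fixes g :: "'a::euclidean_space \<Rightarrow> 'b::euclidean_space"
  assumes der: "(g has_derivative G) (at a)" and xa: "x \<longlonglongrightarrow> a" and ne: "\<And>k. x k \<noteq> a"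
    and dir: "(\<lambda>k. (1/norm(x k - a)) *\<^sub>R (x k - a)) \<longlonglongrightarrow> u"
  shows "(\<lambda>k. (1/norm(x k - a)) *\<^sub>R (g (x k) - g a)) \<longlonglongrightarrow> G u"
proof -
  have bl: "bounded_linear G" using der by (rule has_derivative_bounded_linear)
  have lim0: "((\<lambda>h. norm (g (a + h) - g a - G h) / norm h) \<longlongrightarrow> 0) (at 0)"
    using der unfolding has_derivative_at by blast
  have hk: "filterlim (\<lambda>k. x k - a) (at 0) sequentially"
  proof (rule filterlim_atI)
    show "((\<lambda>k. x k - a) \<longlongrightarrow> 0) sequentially" using xa by (simp add: LIM_zero)
    show "\<forall>\<^sub>F k in sequentially. x k - a \<noteq> 0" using ne by simp
  qed
  have "((\<lambda>k. norm (g (a + (x k - a)) - g a - G (x k - a)) / norm (x k - a)) \<longlongrightarrow> 0) sequentially"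
    using filterlim_compose[OF lim0 hk] by simp
  then have r0: "((\<lambda>k. norm ((1/norm(x k - a)) *\<^sub>R (g (x k) - g a - G (x k - a)))) \<longlongrightarrow> 0) sequentially"
    by (simp add: divide_inverse mult.commute)
  have r1: "(\<lambda>k. (1/norm(x k - a)) *\<^sub>R (g (x k) - g a - G (x k - a))) \<longlonglongrightarrow> 0"
    by (rule tendsto_norm_zero_cancel[OF r0])
  have r2: "(\<lambda>k. G ((1/norm(x k - a)) *\<^sub>R (x k - a))) \<longlonglongrightarrow> G u"
    by (rule bounded_linear.tendsto[OF bl dir])
  have "(\<lambda>k. (1/norm(x k - a)) *\<^sub>R (g (x k) - g a - G (x k - a)) + G ((1/norm(x k - a)) *\<^sub>R (x k - a))) \<longlonglongrightarrow> 0 + G u"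
    by (rule tendsto_add[OF r1 r2])
  moreover have "(1/norm(x k - a)) *\<^sub>R (g (x k) - g a - G (x k - a)) + G ((1/norm(x k - a)) *\<^sub>R (x k - a))
      = (1/norm(x k - a)) *\<^sub>R (g (x k) - g a)" for k
    apply (subst linear_scale[OF bounded_linear.linear[OF bl]])
    apply (simp add: algebra_simps)
    done
  ultimately show ?thesis by simp
qed

lemma second_order:
  fixes g :: "'a::euclidean_space \<Rightarrow> 'b::euclidean_space"
  assumes g1: "\<And>x. (g has_derivative blinfun_apply (g' x)) (at x)"
    and g2: "\<And>x. (g' has_derivative blinfun_apply (g'' x)) (at x)"
  shows "\<exists>z \<xi>. norm (z - a) \<le> norm h \<and> 0 < \<xi> \<and> \<xi> < 1 \<and>
     inner v (g (a + h) - g a) = inner v (g' a h) + \<xi> * inner v (g'' z h h)"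
proof -
  define \<phi> where "\<phi> s = inner v (g (a + s *\<^sub>R h))" for s :: real
  have dphi: "(\<phi> has_derivative (\<lambda>r. r * inner v (g' (a + s *\<^sub>R h) h))) (at s within {0..1})" for s
  proof -
    have l: "((\<lambda>s. a + s *\<^sub>R h) has_derivative (\<lambda>r. r *\<^sub>R h)) (at s within {0..1})"
      by (auto intro!: derivative_eq_intros)
    have "((\<lambda>s. g (a + s *\<^sub>R h)) has_derivative (\<lambda>r. g' (a + s *\<^sub>R h) (r *\<^sub>R h))) (at s within {0..1})"
      using has_derivative_compose[OF l g1] .
    then have "(\<phi> has_derivative (\<lambda>r. inner v (g' (a + s *\<^sub>R h) (r *\<^sub>R h)))) (at s within {0..1})"
      unfolding \<phi>_def by (rule has_derivative_inner_right)
    then show ?thesis by (simp add: blinfun.scaleR_right)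
  qed
  obtain \<xi> where xi: "\<xi> \<in> {0<..<1}" "\<phi> 1 - \<phi> 0 = (1 - 0) * inner v (g' (a + \<xi> *\<^sub>R h) h)"
    using mvt_simple[of 0 1 \<phi> "\<lambda>s r. r * inner v (g' (a + s *\<^sub>R h) h)"] dphi by auto
  define \<psi> where "\<psi> s = inner v (g' (a + s *\<^sub>R h) h)" for s :: real
  have dpsi: "(\<psi> has_derivative (\<lambda>r. r * inner v (g'' (a + s *\<^sub>R h) h h))) (at s within {0..\<xi>})" for s
  proof -
    have l: "((\<lambda>s. a + s *\<^sub>R h) has_derivative (\<lambda>r. r *\<^sub>R h)) (at s within {0..\<xi>})"
      by (auto intro!: derivative_eq_intros)
    have c: "((\<lambda>s. g' (a + s *\<^sub>R h)) has_derivative (\<lambda>r. g'' (a + s *\<^sub>R h) (r *\<^sub>R h))) (at s within {0..\<xi>})"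
      using has_derivative_compose[OF l g2] .
    have bl: "bounded_linear (\<lambda>B. inner v (blinfun_apply B h))"
      by (rule bounded_linear_compose[OF bounded_linear_inner_right blinfun.bounded_linear_left])
    have "(\<psi> has_derivative (\<lambda>r. inner v (g'' (a + s *\<^sub>R h) (r *\<^sub>R h) h))) (at s within {0..\<xi>})"
      unfolding \<psi>_def using bounded_linear.has_derivative[OF bl c] .
    then show ?thesis by (simp add: blinfun.scaleR_right blinfun.scaleR_left)
  qed
  obtain \<eta> where eta: "\<eta> \<in> {0<..<\<xi>}" "\<psi> \<xi> - \<psi> 0 = (\<xi> - 0) * inner v (g'' (a + \<eta> *\<^sub>R h) h h)"
    using mvt_simple[of 0 \<xi> \<psi> "\<lambda>s r. r * inner v (g'' (a + s *\<^sub>R h) h h)"] dpsi xi by auto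
  show ?thesis
  proof (intro exI conjI)
    show "norm ((a + \<eta> *\<^sub>R h) - a) \<le> norm h" using eta xi by (auto simp: mult_left_le_one_le)
    show "0 < \<xi>" "\<xi> < 1" using xi by auto
    have "inner v (g (a + h) - g a) = \<phi> 1 - \<phi> 0" by (simp add: \<phi>_def inner_diff_right)
    also have "\<dots> = \<psi> \<xi>" using xi by (simp add: \<psi>_def)
    also have "\<dots> = \<psi> 0 + \<xi> * inner v (g'' (a + \<eta> *\<^sub>R h) h h)" using eta by simp
    also have "\<psi> 0 = inner v (g' a h)" by (simp add: \<psi>_def)
    finally show "inner v (g (a + h) - g a) = inner v (g' a h) + \<xi> * inner v (g'' (a + \<eta> *\<^sub>R h) h h)" .
  qed
qed



theorem mainTheorem16:
  fixes g :: "'a::euclidean_space \<Rightarrow> 'b::euclidean_space"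
    and g' :: "'a \<Rightarrow> 'a \<Rightarrow>\<^sub>L 'b"
    and g'' :: "'a \<Rightarrow> 'a \<Rightarrow>\<^sub>L ('a \<Rightarrow>\<^sub>L 'b)"
    and D :: "'b set" and xb u :: 'a
  assumes g1: "\<And>x. (g has_derivative blinfun_apply (g' x)) (at x)"
    and g2: "\<And>x. (g' has_derivative blinfun_apply (g'' x)) (at x)"
    and g2c: "continuous_on UNIV g''"
    and Dcl: "closed D"
    and ingph: "(xb, 0) \<in> gph (\<lambda>x. {g x - d | d. d \<in> D})"
    and u1: "norm u = 1"
    and cond: "(\<forall>ys \<in> dir_normal D (g xb) (blinfun_apply (g' xb) u).
                  adjoint (blinfun_apply (g' xb)) ys = 0 \<longrightarrow> ys = 0)
             \<or> (locally_polyhedral D (g xb) \<and>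
                (\<forall>ys \<in> dir_normal D (g xb) (blinfun_apply (g' xb) u).
                  adjoint (blinfun_apply (g' xb)) ys = 0 \<and>
                  inner ys (blinfun_apply (blinfun_apply (g'' xb) u) u) \<ge> 0 \<longrightarrow> ys = 0))"
  shows "strongly_asymp_regular (\<lambda>x. {g x - d | d. d \<in> D}) xb 0 u"
  unfolding strongly_asymp_regular_def
proof (intro allI impI)
  fix x :: "nat \<Rightarrow> 'a" and y :: "nat \<Rightarrow> 'b" and xs :: "nat \<Rightarrow> 'a" and lam :: "nat \<Rightarrow> 'b" and xst :: 'a and yst :: 'b
  let ?Phi = "\<lambda>x. {g x - d | d. d \<in> D}"
  assume H: "(\<forall>k. (x k, y k) \<in> gph ?Phi) \<and>
       (\<forall>k. x k \<notin> {z. 0 \<in> ?Phi z}) \<and> (\<forall>k. y k \<noteq> 0) \<and>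
       (\<forall>k. xs k \<in> reg_coderiv ?Phi (x k) (y k) (lam k)) \<and>
       x \<longlonglongrightarrow> xb \<and> y \<longlonglongrightarrow> 0 \<and> xs \<longlonglongrightarrow> xst \<and>
       (\<lambda>k. (1 / norm (x k - xb)) *\<^sub>R (x k - xb)) \<longlonglongrightarrow> u \<and>
       (\<lambda>k. (1 / norm (x k - xb)) *\<^sub>R (y k - 0)) \<longlonglongrightarrow> 0 \<and>
       filterlim (\<lambda>k. norm (lam k)) at_top sequentially \<and>
       (\<lambda>k. (1 / norm (y k - 0)) *\<^sub>R (y k - 0) - (1 / norm (lam k)) *\<^sub>R lam k) \<longlonglongrightarrow> 0 \<and>
       (\<lambda>k. (norm (y k - 0) / norm (x k - xb)) *\<^sub>R lam k) \<longlonglongrightarrow> yst"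
  have hgph: "\<And>k. (x k, y k) \<in> gph ?Phi" using H by blast
  have hx: "\<And>k. x k \<notin> {z. 0 \<in> ?Phi z}" using H by blast
  have hxs: "\<And>k. xs k \<in> reg_coderiv ?Phi (x k) (y k) (lam k)" using H by blast
  have xlim: "x \<longlonglongrightarrow> xb" and ylim: "y \<longlonglongrightarrow> 0" and xslim: "xs \<longlonglongrightarrow> xst" using H by blast+
  have dirx: "(\<lambda>k. (1 / norm (x k - xb)) *\<^sub>R (x k - xb)) \<longlonglongrightarrow> u" using H by blast
  have diry: "(\<lambda>k. (1 / norm (x k - xb)) *\<^sub>R y k) \<longlonglongrightarrow> 0" using H by simp
  have laminf: "filterlim (\<lambda>k. norm (lam k)) at_top sequentially" using H by blast
  have align: "(\<lambda>k. (1 / norm (y k)) *\<^sub>R y k - (1 / norm (lam k)) *\<^sub>R lam k) \<longlonglongrightarrow> 0" using H by simp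

  have gxbD: "g xb \<in> D" using ingph by (auto simp: gph_def)
  have xne: "x k \<noteq> xb" for k
  proof
    assume "x k = xb"
    moreover have "0 \<in> ?Phi xb" using gxbD by force
    ultimately show False using hx[of k] by simp
  qed
  define t where "t k = norm (x k - xb)" for k
  have tpos: "t k > 0" for k using xne by (simp add: t_def)
  define dd where "dd k = g (x k) - y k" for k
  have ddD: "dd k \<in> D" for k using hgph[of k] by (auto simp: gph_def dd_def)
  have nrm: "(xs k, - lam k) \<in> reg_normal {(x,y). y \<in> {g x - d |d. d \<in> D}} (x k, y k)" for k
    using hxs[of k] by (simp add: reg_coderiv_def gph_def)
  have lamN: "lam k \<in> reg_normal D (dd k)" for k
    unfolding dd_def by (rule gph_normal_D[OF nrm])
  have xsadj: "xs k = adjoint (blinfun_apply (g' (x k))) (lam k)" for k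
    by (rule gph_normal_adj[OF g1 nrm])
  define nu where "nu k = (1 / norm (lam k)) *\<^sub>R lam k" for k
  obtain N0 where N0: "\<And>k. k \<ge> N0 \<Longrightarrow> norm (lam k) > 0"
  proof -
    have "eventually (\<lambda>k. 0 < norm (lam k)) sequentially"
      using laminf unfolding filterlim_at_top_dense by blast
    then show ?thesis using that unfolding eventually_sequentially by blast
  qed
  have nuN: "nu k \<in> reg_normal D (dd k)" if "k \<ge> N0" for k
    unfolding nu_def using reg_normal_scale[OF lamN] N0[OF that] by simp
  have nun: "norm (nu k) = 1" if "k \<ge> N0" for k
    unfolding nu_def using N0[OF that] by simp
  have invlam: "(\<lambda>k. inverse (norm (lam k))) \<longlonglongrightarrow> 0"
    by (rule tendsto_inverse_0_at_top[OF laminf])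
  have xsl0: "(\<lambda>k. inverse (norm (lam k)) *\<^sub>R xs k) \<longlonglongrightarrow> 0"
    using tendsto_scaleR[OF invlam xslim] by simp
  have tlim: "t \<longlonglongrightarrow> 0"
  proof -
    have "(\<lambda>k. x k - xb) \<longlonglongrightarrow> 0" using xlim by (simp add: LIM_zero)
    then show ?thesis unfolding t_def using tendsto_norm by fastforce
  qed
  have wlim: "(\<lambda>k. (1 / t k) *\<^sub>R (dd k - g xb)) \<longlonglongrightarrow> blinfun_apply (g' xb) u"
  proof -
    have a: "(\<lambda>k. (1 / t k) *\<^sub>R (g (x k) - g xb)) \<longlonglongrightarrow> blinfun_apply (g' xb) u"
      unfolding t_def by (rule deriv_seq[OF g1 xlim xne dirx])
    have "(\<lambda>k. (1 / t k) *\<^sub>R (g (x k) - g xb) - (1 / t k) *\<^sub>R y k) \<longlonglongrightarrow> blinfun_apply (g' xb) u - 0"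
      by (rule tendsto_diff[OF a]) (use diry in \<open>simp add: t_def\<close>)
    moreover have "(1 / t k) *\<^sub>R (g (x k) - g xb) - (1 / t k) *\<^sub>R y k = (1 / t k) *\<^sub>R (dd k - g xb)" for k
      by (simp add: dd_def algebra_simps)
    ultimately show ?thesis by simp
  qed
  have g'cont: "isCont g' xb" using has_derivative_continuous[OF g2] .

  have common: "\<exists>r \<nu>. strict_mono r \<and> (\<forall>k. r k \<in> S) \<and> (\<lambda>k. nu (r k)) \<longlonglongrightarrow> \<nu> \<and> norm \<nu> = 1 \<and>
     \<nu> \<in> dir_normal D (g xb) (blinfun_apply (g' xb) u) \<and> adjoint (blinfun_apply (g' xb)) \<nu> = 0"
    if S: "infinite S" "S \<subseteq> {N0..}" for S
  proof -
    obtain r1 :: "nat \<Rightarrow> nat" where r1: "strict_mono r1" "\<And>n. r1 n \<in> S"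
      using infinite_enumerate[OF S(1)] by blast
    have r1N: "r1 n \<ge> N0" for n using r1(2)[of n] S(2) by auto
    have "bounded (range (nu \<circ> r1))"
      unfolding bounded_iff using nun[OF r1N] by (intro exI[of _ 1]) auto
    then obtain \<nu> r2 where r2: "strict_mono (r2 :: nat \<Rightarrow> nat)" "((nu \<circ> r1) \<circ> r2) \<longlonglongrightarrow> \<nu>"
      using bounded_imp_convergent_subsequence by blast
    define r where "r = r1 \<circ> r2"
    have r: "strict_mono r" unfolding r_def by (rule strict_mono_o[OF r1(1) r2(1)])
    have rS: "r k \<in> S" for k by (simp add: r_def r1(2))
    have rN: "r k \<ge> N0" for k by (simp add: r_def r1N)
    have nulim: "(\<lambda>k. nu (r k)) \<longlonglongrightarrow> \<nu>" using r2(2) by (simp add: r_def o_def)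
    have nn: "norm \<nu> = 1"
    proof -
      have "(\<lambda>k. norm (nu (r k))) \<longlonglongrightarrow> norm \<nu>" by (rule tendsto_norm[OF nulim])
      moreover have "(\<lambda>k. norm (nu (r k))) = (\<lambda>k. 1)" using nun[OF rN] by simp
      ultimately show ?thesis using LIMSEQ_unique tendsto_const by metis
    qed
    have dn: "\<nu> \<in> dir_normal D (g xb) (blinfun_apply (g' xb) u)"
      unfolding dir_normal_def
    proof (intro CollectI exI conjI allI)
      show "0 < t (r k)" for k by (rule tpos)
      show "(\<lambda>k. t (r k)) \<longlonglongrightarrow> 0" using LIMSEQ_subseq_LIMSEQ[OF tlim r] by (simp add: o_def)
      show "(\<lambda>k. (1 / t (r k)) *\<^sub>R (dd (r k) - g xb)) \<longlonglongrightarrow> blinfun_apply (g' xb) u"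
        using LIMSEQ_subseq_LIMSEQ[OF wlim r] by (simp add: o_def)
      show "(\<lambda>k. nu (r k)) \<longlonglongrightarrow> \<nu>" by (rule nulim)
      show "nu (r k) \<in> reg_normal D (g xb + t (r k) *\<^sub>R ((1 / t (r k)) *\<^sub>R (dd (r k) - g xb)))" for k
        using nuN[OF rN[of k]] tpos[of "r k"] by simp
    qed
    have adj0: "adjoint (blinfun_apply (g' xb)) \<nu> = 0"
    proof -
      have lin: "linear (blinfun_apply (g' xb))" by (rule bounded_linear.linear[OF blinfun.bounded_linear_right])
      have ih: "inner \<nu> (blinfun_apply (g' xb) h) = 0" for h
      proof -
        have lim1: "(\<lambda>k. inner (nu (r k)) (blinfun_apply (g' (x (r k))) h)) \<longlonglongrightarrow> inner \<nu> (blinfun_apply (g' xb) h)"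
        proof (rule tendsto_inner[OF nulim])
          have "(\<lambda>k. g' (x (r k))) \<longlonglongrightarrow> g' xb"
            using isCont_tendsto_compose[OF g'cont LIMSEQ_subseq_LIMSEQ[OF xlim r]] by (simp add: o_def)
          then show "(\<lambda>k. blinfun_apply (g' (x (r k))) h) \<longlonglongrightarrow> blinfun_apply (g' xb) h"
            by (rule blinfun.tendsto) simp
        qed
        have eqk: "inner (nu (r k)) (blinfun_apply (g' (x (r k))) h) = inner (inverse (norm (lam (r k))) *\<^sub>R xs (r k)) h" for k
        proof -
          have l: "linear (blinfun_apply (g' (x (r k))))" by (rule bounded_linear.linear[OF blinfun.bounded_linear_right])
          have "inner (nu (r k)) (blinfun_apply (g' (x (r k))) h) = inverse (norm (lam (r k))) * inner (lam (r k)) (blinfun_apply (g' (x (r k))) h)"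
            by (simp add: nu_def divide_inverse)
          also have "inner (lam (r k)) (blinfun_apply (g' (x (r k))) h) = inner (xs (r k)) h"
            using adjoint_works[OF l, of h "lam (r k)"] xsadj[of "r k"] by (simp add: inner_commute)
          finally show ?thesis by simp
        qed
        have lim2: "(\<lambda>k. inner (inverse (norm (lam (r k))) *\<^sub>R xs (r k)) h) \<longlonglongrightarrow> inner 0 h"
          using tendsto_inner[OF LIMSEQ_subseq_LIMSEQ[OF xsl0 r] tendsto_const] by (simp add: o_def)
        show ?thesis using LIMSEQ_unique[OF lim1] lim2 eqk by simp
      qed
      have "inner (adjoint (blinfun_apply (g' xb)) \<nu>) (adjoint (blinfun_apply (g' xb)) \<nu>) = 0"
        using adjoint_works[OF lin, of "adjoint (blinfun_apply (g' xb)) \<nu>" \<nu>] ih by (simp add: inner_commute)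
      then show ?thesis by simp
    qed
    show ?thesis using r rS nulim nn dn adj0 by blast
  qed

  have False
  proof (cases "\<forall>ys \<in> dir_normal D (g xb) (blinfun_apply (g' xb) u).
                  adjoint (blinfun_apply (g' xb)) ys = 0 \<longrightarrow> ys = 0")
    case True
    obtain r \<nu> where "norm \<nu> = 1" "\<nu> \<in> dir_normal D (g xb) (blinfun_apply (g' xb) u)"
        "adjoint (blinfun_apply (g' xb)) \<nu> = 0"
      using common[of "{N0..}"] infinite_Ici by blast
    then show False using True by force
  next
    case False
    then have poly: "locally_polyhedral D (g xb)" and sos: "\<forall>ys \<in> dir_normal D (g xb) (blinfun_apply (g' xb) u).
                  adjoint (blinfun_apply (g' xb)) ys = 0 \<and>
                  inner ys (blinfun_apply (blinfun_apply (g'' xb) u) u) \<ge> 0 \<longrightarrow> ys = 0"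
      using cond by blast+
    obtain V P where VP: "open V" "g xb \<in> V" "finite P" "\<forall>p\<in>P. polyhedron p" "D \<inter> V = \<Union>P"
      using poly unfolding locally_polyhedral_def by blast
    have "\<forall>p\<in>P. \<exists>F. finite F \<and> p = \<Inter>F \<and> (\<forall>h\<in>F. \<exists>a b. a \<noteq> 0 \<and> h = {x. a \<bullet> x \<le> b})"
      using VP(4) unfolding polyhedron_def by blast
    then obtain F where F: "\<forall>p\<in>P. finite (F p) \<and> p = \<Inter>(F p) \<and> (\<forall>h\<in>F p. \<exists>a b. a \<noteq> 0 \<and> h = {x. a \<bullet> x \<le> b})"
      by (rule bchoice[elim_format]) blast
    define HH where "HH = \<Union>(F ` P)"
    have HHfin: "finite HH" using F VP(3) by (auto simp: HH_def)
    have "\<forall>h\<in>HH. \<exists>ab. h = {x. fst ab \<bullet> x \<le> snd ab}"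
      using F unfolding HH_def by fastforce
    then obtain AB where AB: "\<forall>h\<in>HH. h = {x. fst (AB h) \<bullet> x \<le> snd (AB h)}"
      by (rule bchoice[elim_format]) blast
    define A where "A h = fst (AB h)" for h
    define B where "B h = snd (AB h)" for h
    have hAB: "h = {x. A h \<bullet> x \<le> B h}" if "h \<in> HH" for h using AB that by (simp add: A_def B_def)
    have gcont: "isCont g xb" using has_derivative_continuous[OF g1] .
    have ddlim: "dd \<longlonglongrightarrow> g xb"
    proof -
      have "(\<lambda>k. g (x k) - y k) \<longlonglongrightarrow> g xb - 0"
        by (intro tendsto_diff isCont_tendsto_compose[OF gcont xlim] ylim)
      then show ?thesis by (simp add: dd_def[abs_def])
    qed
    obtain N1 where N1: "\<And>k. k \<ge> N1 \<Longrightarrow> dd k \<in> V"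
      using topological_tendstoD[OF ddlim VP(1,2)] unfolding eventually_sequentially by blast
    define N where "N = max N0 N1"
    have exP: "\<exists>p. p \<in> P \<and> dd k \<in> p" if "k \<ge> N" for k
    proof -
      have "dd k \<in> D \<inter> V" using ddD[of k] N1[of k] that by (simp add: N_def)
      then show ?thesis using VP(5) by blast
    qed
    define pk where "pk k = (SOME p. p \<in> P \<and> dd k \<in> p)" for k
    have pk: "pk k \<in> P \<and> dd k \<in> pk k" if "k \<ge> N" for k
      using someI_ex[OF exP[OF that]] by (simp add: pk_def)
    define sig where "sig k = (pk k, {h \<in> HH. A h \<bullet> dd k = B h})" for k
    have "sig ` {N..} \<subseteq> P \<times> Pow HH" using pk by (auto simp: sig_def)
    then have fin: "finite (sig ` {N..})" using VP(3) HHfin by (meson finite_Pow_iff finite_SigmaI finite_subset)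
    obtain k0 where k0: "k0 \<in> {N..}" "infinite {k \<in> {N..}. sig k = sig k0}"
      using pigeonhole_infinite[OF infinite_Ici fin] by blast
    define S where "S = {k \<in> {N..}. sig k = sig k0}"
    have SN0: "S \<subseteq> {N0..}" by (auto simp: S_def N_def)
    obtain r \<nu> where r: "strict_mono r" and rS: "\<And>k. r k \<in> S" and nulim: "(\<lambda>k. nu (r k)) \<longlonglongrightarrow> \<nu>"
      and nn: "norm \<nu> = 1" and dn: "\<nu> \<in> dir_normal D (g xb) (blinfun_apply (g' xb) u)"
      and adj0: "adjoint (blinfun_apply (g' xb)) \<nu> = 0"
      using common[OF k0(2)[folded S_def] SN0] by blast
    define p0 where "p0 = pk k0"
    have p0P: "p0 \<in> P" using pk k0(1) by (simp add: p0_def)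
    have inS: "k \<ge> N" "pk k = p0" "{h \<in> HH. A h \<bullet> dd k = B h} = {h \<in> HH. A h \<bullet> dd k0 = B h}" if "k \<in> S" for k
      using that by (auto simp: S_def sig_def p0_def)
    have ddp0: "dd k \<in> p0" if "k \<in> S" for k using pk[OF inS(1)[OF that]] inS(2)[OF that] by simp
    have act: "A h \<bullet> dd j = B h \<longleftrightarrow> A h \<bullet> dd k = B h" if "j \<in> S" "k \<in> S" "h \<in> HH" for j k h
      using inS(3)[OF that(1)] inS(3)[OF that(2)] that(3) by blast
    have p0cl: "closed p0" using VP(4) p0P polyhedron_imp_closed by blast
    have gp0: "g xb \<in> p0"
      using closed_sequentially[OF p0cl, of "\<lambda>k. dd (r k)"] ddp0[OF rS] LIMSEQ_subseq_LIMSEQ[OF ddlim r]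
      by (simp add: o_def)
    have p0D: "p0 \<subseteq> D" using VP(5) p0P by blast
    have Fp0: "finite (F p0)" "p0 = \<Inter>(F p0)" "F p0 \<subseteq> HH" using F p0P by (auto simp: HH_def)
    have key: "inner (nu j) (g xb - dd k) \<le> 0" if jS: "j \<in> S" and kS: "k \<in> S" for j k
    proof -
      define v where "v = g xb - dd k"
      have each: "\<forall>h\<in>F p0. eventually (\<lambda>s. dd j + s *\<^sub>R v \<in> h) (at_right 0)"
      proof
        fix h assume h: "h \<in> F p0"
        then have hH: "h \<in> HH" using Fp0 by blast
        have ins: "A h \<bullet> dd j \<le> B h" "A h \<bullet> dd k \<le> B h" "A h \<bullet> g xb \<le> B h"
          using ddp0[OF jS] ddp0[OF kS] gp0 h hAB[OF hH] Fp0(2) by blast+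
        show "eventually (\<lambda>s. dd j + s *\<^sub>R v \<in> h) (at_right 0)"
        proof (cases "A h \<bullet> dd j = B h")
          case True
          then have kk: "A h \<bullet> dd k = B h" using act[OF jS kS hH] by simp
          have "dd j + s *\<^sub>R v \<in> h" if "s > 0" for s
          proof -
            have "A h \<bullet> (dd j + s *\<^sub>R v) = B h + s * (A h \<bullet> g xb - B h)"
              using True kk by (simp add: v_def inner_add_right inner_diff_right)
            also have "\<dots> \<le> B h" using that ins(3) by (simp add: mult_nonneg_nonpos)
            finally show ?thesis by (subst hAB[OF hH]) simp
          qed
          then show ?thesis unfolding eventually_at_right_field by (intro exI[of _ 1]) auto
        next
          case False
          define c where "c = B h - A h \<bullet> dd j"
          have c: "c > 0" using False ins(1) by (simp add: c_def)
          define b where "b = c / (\<bar>A h \<bullet> v\<bar> + 1)"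
          have b: "b > 0" using c by (simp add: b_def add_nonneg_pos)
          have "dd j + s *\<^sub>R v \<in> h" if "s > 0" "s < b" for s
          proof -
            have "s * (\<bar>A h \<bullet> v\<bar> + 1) \<le> b * (\<bar>A h \<bullet> v\<bar> + 1)"
              using that by (intro mult_right_mono) auto
            also have "\<dots> = c" by (simp add: b_def add_nonneg_pos)
            finally have sc: "s * (\<bar>A h \<bullet> v\<bar> + 1) \<le> c" .
            have "s * (A h \<bullet> v) \<le> s * (\<bar>A h \<bullet> v\<bar> + 1)" using that by (intro mult_left_mono) auto
            then have "A h \<bullet> (dd j + s *\<^sub>R v) \<le> B h" using sc by (simp add: c_def inner_add_right)
            then show ?thesis by (subst hAB[OF hH]) simp
          qed
          then show ?thesis unfolding eventually_at_right_field using b by blast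
        qed
      qed
      have "eventually (\<lambda>s. \<forall>h\<in>F p0. dd j + s *\<^sub>R v \<in> h) (at_right 0)"
        by (rule eventually_ball_finite[OF Fp0(1) each])
      then obtain b :: real where b: "b > 0" "\<And>s. s > 0 \<Longrightarrow> s < b \<Longrightarrow> \<forall>h\<in>F p0. dd j + s *\<^sub>R v \<in> h"
        unfolding eventually_at_right_field by auto
      have "dd j + s *\<^sub>R v \<in> D" if "0 < s" "s < b" for s
        using b(2)[OF that] Fp0(2) p0D by blast
      moreover have jN0: "j \<ge> N0" using inS(1)[OF jS] by (simp add: N_def)
      ultimately have "inner (nu j) v \<le> 0"
        using reg_normal_ray[OF nuN[OF jN0] b(1)] by blast
      then show ?thesis by (simp add: v_def)
    qed
    have Pk: "inner \<nu> (g xb - dd (r k)) \<le> 0" for k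
    proof -
      have "(\<lambda>i. inner (nu (r i)) (g xb - dd (r k))) \<longlonglongrightarrow> inner \<nu> (g xb - dd (r k))"
        by (intro tendsto_inner nulim tendsto_const)
      moreover have "\<exists>N. \<forall>n\<ge>N. inner (nu (r n)) (g xb - dd (r k)) \<le> 0" using key rS by blast
      ultimately show ?thesis by (rule LIMSEQ_le_const2)
    qed
    have ex: "\<exists>zx. norm (fst zx - xb) \<le> norm (x (r k) - xb) \<and> 0 < snd zx \<and> snd zx < 1 \<and>
       inner \<nu> (g (xb + (x (r k) - xb)) - g xb) = inner \<nu> (g' xb (x (r k) - xb)) + snd zx * inner \<nu> (g'' (fst zx) (x (r k) - xb) (x (r k) - xb))" for k
    proof -
      obtain z \<xi> where "norm (z - xb) \<le> norm (x (r k) - xb) \<and> 0 < \<xi> \<and> \<xi> < 1 \<and>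
       inner \<nu> (g (xb + (x (r k) - xb)) - g xb) = inner \<nu> (g' xb (x (r k) - xb)) + \<xi> * inner \<nu> (g'' z (x (r k) - xb) (x (r k) - xb))"
        using second_order[OF g1 g2] by blast
      then show ?thesis by (intro exI[of _ "(z, \<xi>)"]) simp
    qed
    obtain ZX where ZX: "\<forall>k. norm (fst (ZX k) - xb) \<le> norm (x (r k) - xb) \<and> 0 < snd (ZX k) \<and> snd (ZX k) < 1 \<and>
       inner \<nu> (g (xb + (x (r k) - xb)) - g xb) = inner \<nu> (g' xb (x (r k) - xb)) + snd (ZX k) * inner \<nu> (g'' (fst (ZX k)) (x (r k) - xb) (x (r k) - xb))"
      using choice[of "\<lambda>k zx. norm (fst zx - xb) \<le> norm (x (r k) - xb) \<and> 0 < snd zx \<and> snd zx < 1 \<and>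
       inner \<nu> (g (xb + (x (r k) - xb)) - g xb) = inner \<nu> (g' xb (x (r k) - xb)) + snd zx * inner \<nu> (g'' (fst zx) (x (r k) - xb) (x (r k) - xb))"] ex
      by blast
    define Z where "Z k = fst (ZX k)" for k
    define Xi where "Xi k = snd (ZX k)" for k
    define uu where "uu k = (1 / t k) *\<^sub>R (x k - xb)" for k
    have lin0: "linear (blinfun_apply (g' xb))" by (rule bounded_linear.linear[OF blinfun.bounded_linear_right])
    have g'0: "inner \<nu> (g' xb h) = 0" for h
      using adjoint_works[OF lin0, of h \<nu>] adj0 by (simp add: inner_commute)
    have hk: "x k - xb = t k *\<^sub>R uu k" for k using tpos[of k] by (simp add: uu_def)
    have Zk: "norm (Z k - xb) \<le> t (r k)" "Xi k > 0"
      and eqk: "inner \<nu> (g (x (r k)) - g xb) = Xi k * ((t (r k))\<^sup>2 * inner \<nu> (g'' (Z k) (uu (r k)) (uu (r k))))" for k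
    proof -
      show "norm (Z k - xb) \<le> t (r k)" "Xi k > 0" using ZX by (auto simp: Z_def Xi_def t_def)
      have "inner \<nu> (g (x (r k)) - g xb) = Xi k * inner \<nu> (g'' (Z k) (x (r k) - xb) (x (r k) - xb))"
        using ZX[rule_format, of k] g'0 by (simp add: Z_def Xi_def)
      also have "inner \<nu> (g'' (Z k) (x (r k) - xb) (x (r k) - xb)) = (t (r k))\<^sup>2 * inner \<nu> (g'' (Z k) (uu (r k)) (uu (r k)))"
        unfolding hk[of "r k"] by (simp add: blinfun.scaleR_right blinfun.scaleR_left power2_eq_square)
      finally show "inner \<nu> (g (x (r k)) - g xb) = Xi k * ((t (r k))\<^sup>2 * inner \<nu> (g'' (Z k) (uu (r k)) (uu (r k))))" .
    qed
    have ylim1: "(\<lambda>k. (1 / norm (y (r k))) *\<^sub>R y (r k)) \<longlonglongrightarrow> \<nu>"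
    proof -
      have "(\<lambda>k. ((1 / norm (y (r k))) *\<^sub>R y (r k) - nu (r k)) + nu (r k)) \<longlonglongrightarrow> 0 + \<nu>"
        using tendsto_add[OF LIMSEQ_subseq_LIMSEQ[OF align r] nulim] by (simp add: o_def nu_def)
      then show ?thesis by simp
    qed
    have "(\<lambda>k. inner \<nu> ((1 / norm (y (r k))) *\<^sub>R y (r k))) \<longlonglongrightarrow> inner \<nu> \<nu>"
      by (intro tendsto_inner tendsto_const ylim1)
    moreover have "inner \<nu> \<nu> = 1" using nn by (simp add: power2_norm_eq_inner[symmetric])
    ultimately have "eventually (\<lambda>k. 0 < inner \<nu> ((1 / norm (y (r k))) *\<^sub>R y (r k))) sequentially"
      using order_tendstoD(1)[of _ "inner \<nu> \<nu>" sequentially 0] by simp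
    then obtain N2 where N2: "\<And>k. k \<ge> N2 \<Longrightarrow> 0 < inner \<nu> ((1 / norm (y (r k))) *\<^sub>R y (r k))"
      unfolding eventually_sequentially by blast
    have Qpos: "0 \<le> inner \<nu> (g'' (Z k) (uu (r k)) (uu (r k)))" if "k \<ge> N2" for k
    proof -
      have yne: "norm (y (r k)) > 0" using H by simp
      have "0 < (1 / norm (y (r k))) * inner \<nu> (y (r k))" using N2[OF that] by simp
      then have y0: "0 < inner \<nu> (y (r k))" using yne by (simp add: zero_less_divide_iff)
      have "y (r k) = (g (x (r k)) - g xb) + (g xb - dd (r k))" by (simp add: dd_def)
      then have "inner \<nu> (y (r k)) = inner \<nu> (g (x (r k)) - g xb) + inner \<nu> (g xb - dd (r k))"
        by (metis inner_add_right)
      then have "0 < Xi k * ((t (r k))\<^sup>2 * inner \<nu> (g'' (Z k) (uu (r k)) (uu (r k))))"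
        using y0 Pk[of k] eqk[of k] by linarith
      then have "0 < (t (r k))\<^sup>2 * inner \<nu> (g'' (Z k) (uu (r k)) (uu (r k)))"
        using Zk(2)[of k] by (simp add: zero_less_mult_iff)
      then show ?thesis using tpos[of "r k"] by (simp add: zero_less_mult_iff)
    qed
    have Zlim: "Z \<longlonglongrightarrow> xb"
    proof -
      have tl: "(\<lambda>k. t (r k)) \<longlonglongrightarrow> 0" using LIMSEQ_subseq_LIMSEQ[OF tlim r] by (simp add: o_def)
      have e1: "eventually (\<lambda>k. 0 \<le> norm (Z k - xb)) sequentially" by simp
      have e2: "eventually (\<lambda>k. norm (Z k - xb) \<le> t (r k)) sequentially" using Zk(1) by simp
      have "(\<lambda>k. norm (Z k - xb)) \<longlonglongrightarrow> 0"
        by (rule tendsto_sandwich[OF e1 e2 tendsto_const tl])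
      then show ?thesis by (simp add: tendsto_norm_zero_iff LIM_zero_iff)
    qed
    have g''cont: "isCont g'' xb" using g2c continuous_on_eq_continuous_at[OF open_UNIV] by blast
    have ulim: "(\<lambda>k. uu (r k)) \<longlonglongrightarrow> u" using LIMSEQ_subseq_LIMSEQ[OF dirx r] by (simp add: o_def uu_def t_def)
    have Blim: "(\<lambda>k. g'' (Z k)) \<longlonglongrightarrow> g'' xb" by (rule isCont_tendsto_compose[OF g''cont Zlim])
    have "(\<lambda>k. inner \<nu> (g'' (Z k) (uu (r k)) (uu (r k)))) \<longlonglongrightarrow> inner \<nu> (g'' xb u u)"
      by (intro tendsto_inner tendsto_const blinfun.tendsto Blim ulim)
    then have "0 \<le> inner \<nu> (g'' xb u u)"
      by (rule LIMSEQ_le_const) (use Qpos in blast)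
    then have "\<nu> = 0" using sos dn adj0 by blast
    then show False using nn by simp
  qed
  then show "\<exists>lm. xst \<in> dir_coderiv ?Phi xb 0 u 0 lm" by blast
qed

end
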